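(* Let $q$ be a prime power, $r\ge 1$ an integer, and $\mathcal{S}$ a $q^r$-divisible spanning set of $q^{r+1}$ points in $\mathrm{PG}(v-1,q)$. If $\mathcal{S}$ contains a full affine $(r+1)$-space, i.e. there exist an $(r+1)$-space $L$ and an $r$-space $F\subseteq L$ such that every point of $L$ not contained in $F$ belongs to $\mathcal{S}$, then $\mathcal{S}$ is an $(r+1)$-cylinder.
   Context: $\mathrm{PG}(v-1,q)$ is the projective space of $\mathbb{F}_q^v$; a $k$-space is a $k$-dimensional subspace of $\mathbb{F}_q^v$ (points are $1$-spaces, hyperplanes $(v-1)$-spaces). A set $\mathcal{S}$ of points is spanning if its points span $\mathbb{F}_q^v$, and it is $q^r$-divisible if $|\mathcal{S}\cap H|\equiv|\mathcal{S}|\pmod{q^r}$ for every hyperplane $H$. An $(r+1)$-cylinder is a multiset of $q^{r+1}$ points which arises as the union (counted with multiplicity) of the point sets $L_1\setminus F,\dots,L_q\setminus F$, where $L_1,\dots,L_q$ are $(r+1)$-spaces and $F$ is an $r$-space contained in every $L_i$ ($L_i\setminus F$ denotes the set of points of $L_i$ not in $F$). *)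

theory Defs
  imports "HOL-Analysis.Analysis" "HOL-Library.Multiset"
begin

text \<open>Ambient space: F_q^v is the type 'F ^ 'n with 'F a finite field (q = CARD('F))
  and v = CARD('n). A k-space is a linear subspace of dimension k; a point is a 1-space.\<close>

definition kspace :: "nat \<Rightarrow> ('F::{field,finite} ^ 'n) set \<Rightarrow> bool" where
  "kspace k W \<longleftrightarrow> vec.subspace W \<and> vec.dim W = k"

definition ppoint :: "('F::{field,finite} ^ 'n) set \<Rightarrow> bool" where
  "ppoint P \<longleftrightarrow> kspace 1 P"

definition hyperplane :: "('F::{field,finite} ^ 'n) set \<Rightarrow> bool" where
  "hyperplane H \<longleftrightarrow> kspace (CARD('n) - 1) H"

definition points_of :: "('F::{field,finite} ^ 'n) set \<Rightarrow> ('F ^ 'n) set set" where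
  "points_of W = {P. ppoint P \<and> P \<subseteq> W}"

definition spanning :: "('F::{field,finite} ^ 'n) set set \<Rightarrow> bool" where
  "spanning S \<longleftrightarrow> vec.span (\<Union>S) = UNIV"

definition qr_divisible :: "nat \<Rightarrow> ('F::{field,finite} ^ 'n) set set \<Rightarrow> bool" where
  "qr_divisible r S \<longleftrightarrow>
     (\<forall>H. hyperplane H \<longrightarrow> card (S \<inter> points_of H) mod CARD('F) ^ r = card S mod CARD('F) ^ r)"

definition cylinder :: "nat \<Rightarrow> ('F::{field,finite} ^ 'n) set multiset \<Rightarrow> bool" where
  "cylinder r C \<longleftrightarrow> size C = CARD('F) ^ (r + 1) \<and>
     (\<exists>F Ls. kspace r F \<and> length Ls = CARD('F) \<and>
        (\<forall>L\<in>set Ls. kspace (r + 1) L \<and> F \<subseteq> L) \<and>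
        C = sum_list (map (\<lambda>L. mset_set (points_of L - points_of F)) Ls))"

end

theory Submission
  imports Defs
begin


definition dotp :: "'F::{field,finite} ^ 'n \<Rightarrow> 'F ^ 'n \<Rightarrow> 'F" where
  "dotp a y = (\<Sum>i\<in>UNIV. a $ i * y $ i)"

definition hk :: "'F::{field,finite} ^ 'n \<Rightarrow> ('F ^ 'n) set" where
  "hk a = {y. dotp a y = 0}"

lemma dotp_add_left: "dotp (a + b) y = dotp a y + dotp b y"
  by (simp add: dotp_def distrib_right sum.distrib)
lemma dotp_add_right: "dotp a (y + z) = dotp a y + dotp a z"
  by (simp add: dotp_def distrib_left sum.distrib)
lemma dotp_diff_left: "dotp (a - b) y = dotp a y - dotp b y"
  by (simp add: dotp_def left_diff_distrib sum_subtractf)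
lemma dotp_diff_right: "dotp a (y - z) = dotp a y - dotp a z"
  by (simp add: dotp_def right_diff_distrib sum_subtractf)
lemma dotp_scale_left: "dotp (c *s a) y = c * dotp a y"
  by (simp add: dotp_def sum_distrib_left mult.assoc)
lemma dotp_scale_right: "dotp a (c *s y) = c * dotp a y"
  by (simp add: dotp_def sum_distrib_left mult.left_commute)
lemma dotp_zero_left[simp]: "dotp 0 y = 0" by (simp add: dotp_def)
lemma dotp_zero_right[simp]: "dotp a 0 = 0" by (simp add: dotp_def)

lemmas dotp_simps = dotp_add_left dotp_add_right dotp_diff_left dotp_diff_right
  dotp_scale_left dotp_scale_right

lemma subspace_hk: "vec.subspace (hk a)"
  unfolding vec.subspace_def hk_def by (auto simp: dotp_simps)

lemma finite_any[simp]: "finite (X :: ('F::finite ^ 'n) set set)"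
  by (rule finite_subset[of _ UNIV]) auto

lemma finite_vecs[simp]: "finite (X :: ('F::finite ^ 'n) set)"
  by (rule finite_subset[of _ UNIV]) auto

lemma card_field_ge2: "CARD('F::{field,finite}) \<ge> 2"
proof -
  have "card {0::'F, 1} = 2" by simp
  moreover have "card {0::'F, 1} \<le> CARD('F)" by (rule card_mono) auto
  ultimately show ?thesis by simp
qed

lemma span_sing_eq: "vec.span {y} = range (\<lambda>k. k *s y)"
  by (rule vec.span_singleton)

lemma ppoint_span: "(y::'F::{field,finite}^'n) \<noteq> 0 \<Longrightarrow> ppoint (vec.span {y})"
proof -
  assume y: "y \<noteq> 0"
  have "vec.independent {y}" using y
    by (simp add: vec.independent_insert)
  then show ?thesis unfolding ppoint_def kspace_def
    by (simp add: vec.dim_eq_card_independent)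
qed

lemma ppointE:
  assumes "ppoint (P::('F::{field,finite}^'n) set)"
  obtains y where "y \<noteq> 0" "P = vec.span {y}"
proof -
  have sub: "vec.subspace P" and d: "vec.dim P = 1" using assms unfolding ppoint_def kspace_def by auto
  obtain B where B: "B \<subseteq> P" "vec.independent B" "P \<subseteq> vec.span B" "card B = vec.dim P"
    using vec.basis_exists by blast
  then obtain y where By: "B = {y}" using d by (auto simp: card_Suc_eq)
  have "y \<noteq> 0" using B(2) By vec.dependent_zero by auto
  moreover have "P = vec.span {y}"
    using B By sub vec.span_minimal by blast
  ultimately show ?thesis using that by blast
qed

lemma span_sing_subset_iff: "vec.subspace W \<Longrightarrow> vec.span {y} \<subseteq> W \<longleftrightarrow> y \<in> W"
  using vec.span_minimal vec.span_base by blast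

lemma span_sing_hk: "vec.span {y} \<subseteq> hk a \<longleftrightarrow> dotp a y = 0"
  using span_sing_subset_iff[OF subspace_hk] by (simp add: hk_def)

lemma span_sing_scale: "(c::'F::field) \<noteq> 0 \<Longrightarrow> vec.span {c *s y} = vec.span {(y :: 'F^'n)}"
proof -
  assume c: "c \<noteq> 0"
  have "c *s y \<in> vec.span {y}" by (simp add: vec.span_base vec.span_scale)
  moreover have "y \<in> vec.span {c *s y}"
  proof -
    have eq: "inverse c *s (c *s y) = y" using c by simp
    have "inverse c *s (c *s y) \<in> vec.span {c *s y}" by (intro vec.span_scale vec.span_base) simp
    then show ?thesis unfolding eq .
  qed
  ultimately show ?thesis
    using span_sing_subset_iff[OF vec.subspace_span, of "c *s y" "{y}"]
      span_sing_subset_iff[OF vec.subspace_span, of y "{c *s y}"] by blast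
qed

lemma separation:
  fixes W :: "('F::{field,finite}^'n) set"
  assumes sub: "vec.subspace W" and y: "y \<notin> W"
  shows "\<exists>e. (\<forall>w\<in>W. dotp e w = 0) \<and> dotp e y = 1"
proof -
  obtain B where B: "B \<subseteq> W" "vec.independent B" "W \<subseteq> vec.span B" "card B = vec.dim W"
    using vec.basis_exists by blast
  have spB: "vec.span B = W" using B sub vec.span_minimal by blast
  have ind: "vec.independent (insert y B)"
    using B(2) y spB by (simp add: vec.independent_insertI)
  define i0 where "i0 = (undefined :: 'n)"
  define f where "f = vec.construct (insert y B) (\<lambda>z. if z = y then axis i0 (1::'F) else 0)"
  have lin: "Vector_Spaces.linear (*s) (*s) f" unfolding f_def
    by (rule vec.linear_construct[OF ind])
  have fy: "f y = axis i0 1" unfolding f_def using vec.construct_basis[OF ind, of y "\<lambda>z. if z = y then axis i0 1 else 0"] by simp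
  have fB: "f b = 0" if "b \<in> B" for b
  proof -
    have "b \<noteq> y" using that y B(1) by auto
    then show ?thesis unfolding f_def
      using vec.construct_basis[OF ind, of b "\<lambda>z. if z = y then axis i0 1 else 0"] that by simp
  qed
  have fW: "f w = 0" if "w \<in> W" for w
  proof -
    interpret lf: Vector_Spaces.linear "(*s)" "(*s)" f using lin .
    show ?thesis using lf.eq_0_on_span[of B w] fB that spB by auto
  qed
  define e where "e = (\<chi> i. (f (axis i 1)) $ i0)"
  have de: "dotp e z = (f z) $ i0" for z
    unfolding dotp_def e_def linear_componentwise[OF lin, of z i0]
    by (simp add: mult.commute)
  show ?thesis
    by (rule exI[of _ e]) (simp add: de fW fy)
qed

lemma hyperplane_hk:
  fixes a :: "'F::{field,finite}^'n"
  assumes "a \<noteq> 0"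
  shows "hyperplane (hk a)"
proof -
  obtain i where ai: "a $ i \<noteq> 0" using assms by (metis vec_eq_iff zero_index)
  define e where "e = axis i (inverse (a $ i))"
  have de: "dotp a e = 1"
  proof -
    have "dotp a e = (\<Sum>j\<in>UNIV. if j = i then a $ i * inverse (a $ i) else 0)"
      unfolding dotp_def e_def by (intro sum.cong) (auto simp: axis_def)
    then show ?thesis using ai by simp
  qed
  have eK: "e \<notin> hk a" using de by (simp add: hk_def)
  have spK: "vec.span (hk a) = hk a" using subspace_hk by simp
  have "vec.span (insert e (hk a)) = UNIV"
  proof -
    have "z \<in> vec.span (insert e (hk a))" for z
    proof -
      have "z - dotp a z *s e \<in> hk a" by (simp add: hk_def dotp_simps de)
      then show ?thesis unfolding vec.span_breakdown_eq spK by blast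
    qed
    then show ?thesis by auto
  qed
  then have "vec.dim (insert e (hk a)) = CARD('n)"
    by (metis vec.dim_span vec.dim_UNIV card_cart_basis)
  moreover have "vec.dim (insert e (hk a)) = vec.dim (hk a) + 1"
    using eK spK by (simp add: vec.dim_insert del: vec.span_eq_iff)
  ultimately have "vec.dim (hk a) = CARD('n) - 1" by simp
  then show ?thesis unfolding hyperplane_def kspace_def using subspace_hk[of a] by blast
qed

lemma card_subspace:
  fixes W :: "('F::{field,finite}^'n) set"
  assumes sub: "vec.subspace W"
  shows "card W = CARD('F) ^ vec.dim W"
proof -
  obtain B where B: "B \<subseteq> W" "vec.independent B" "W \<subseteq> vec.span B" "card B = vec.dim W"
    using vec.basis_exists by blast
  have spB: "vec.span B = W" using B sub vec.span_minimal by blast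
  have fB: "finite B" by simp
  define g where "g u = (\<Sum>v\<in>B. u v *s v)" for u :: "'F^'n \<Rightarrow> 'F"
  have inj: "inj_on g (PiE B (\<lambda>_. UNIV))"
  proof (rule inj_onI)
    fix u u' assume u: "u \<in> PiE B (\<lambda>_. UNIV)" and u': "u' \<in> PiE B (\<lambda>_. UNIV)" and eq: "g u = g u'"
    have "(\<Sum>v\<in>B. (u v - u' v) *s v) = 0"
      using eq by (simp add: g_def scaleR_diff_left sum_subtractf vec.scale_left_diff_distrib)
    moreover have "\<forall>c. (\<Sum>v\<in>B. c v *s v) = 0 \<longrightarrow> (\<forall>v\<in>B. c v = 0)"
      using B(2) unfolding vec.independent_explicit by blast
    ultimately have "\<forall>v\<in>B. u v - u' v = 0" by (rule mp[OF spec[of _ "\<lambda>v. u v - u' v"], rotated])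
    then show "u = u'" using u u' by (auto simp: PiE_def extensional_def fun_eq_iff)
  qed
  have img: "g ` (PiE B (\<lambda>_. UNIV)) = W"
  proof -
    have "vec.span B = range g" unfolding g_def by (rule vec.span_finite[OF fB])
    moreover have "range g = g ` (PiE B (\<lambda>_. UNIV))"
    proof
      show "range g \<subseteq> g ` (PiE B (\<lambda>_. UNIV))"
      proof
        fix z assume "z \<in> range g"
        then obtain u where z: "z = g u" by auto
        have "g u = g (restrict u B)" unfolding g_def by (intro sum.cong) auto
        moreover have "restrict u B \<in> PiE B (\<lambda>_. UNIV)" by auto
        ultimately show "z \<in> g ` (PiE B (\<lambda>_. UNIV))" using z by blast
      qed
    qed auto
    ultimately show ?thesis using spB by simp
  qed
  have "card W = card (PiE B (\<lambda>_. UNIV :: 'F set))"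
    using card_image[OF inj] img by simp
  also have "\<dots> = CARD('F) ^ card B" by (simp add: card_PiE)
  finally show ?thesis using B(4) by simp
qed



lemma card_filter_sum: "finite A \<Longrightarrow> card {x\<in>A. R x} = (\<Sum>x\<in>A. if R x then 1 else 0)"
  by (simp add: sum.inter_filter[symmetric])

lemma card_partition_vals:
  fixes g :: "'a \<Rightarrow> 'F::finite"
  assumes "finite A"
  shows "card A = (\<Sum>c\<in>UNIV. card {a\<in>A. g a = c})"
proof -
  have "A = (\<Union>c\<in>UNIV. {a\<in>A. g a = c})" by auto
  moreover have "card (\<Union>c\<in>UNIV. {a\<in>A. g a = c}) = (\<Sum>c\<in>UNIV. card {a\<in>A. g a = c})"
    using assms by (intro card_UN_disjoint) auto
  ultimately show ?thesis by simp
qed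

lemma shift_card:
  fixes p e :: "'F::{field,finite}^'n"
  assumes e: "dotp e p = 1" and A1: "\<And>a. a \<in> A \<Longrightarrow> a + c *s e \<in> A"
    and A2: "\<And>a. a \<in> A \<Longrightarrow> a - c *s e \<in> A"
  shows "card {a\<in>A. dotp a p = c} = card {a\<in>A. dotp a p = 0}"
proof -
  have "bij_betw (\<lambda>a. a + c *s e) {a\<in>A. dotp a p = 0} {a\<in>A. dotp a p = c}"
  proof (rule bij_betw_byWitness[where f'="\<lambda>a. a - c *s e"])
    show "(\<lambda>a. a + c *s e) ` {a \<in> A. dotp a p = 0} \<subseteq> {a \<in> A. dotp a p = c}"
    proof
      fix z assume "z \<in> (\<lambda>a. a + c *s e) ` {a \<in> A. dotp a p = 0}"
      then obtain a where a: "a \<in> A" "dotp a p = 0" "z = a + c *s e" by auto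
      then show "z \<in> {a \<in> A. dotp a p = c}" using A1[OF a(1)] by (simp add: dotp_simps e)
    qed
    show "(\<lambda>a. a - c *s e) ` {a \<in> A. dotp a p = c} \<subseteq> {a \<in> A. dotp a p = 0}"
    proof
      fix z assume "z \<in> (\<lambda>a. a - c *s e) ` {a \<in> A. dotp a p = c}"
      then obtain a where a: "a \<in> A" "dotp a p = c" "z = a - c *s e" by auto
      then show "z \<in> {a \<in> A. dotp a p = 0}" using A2[OF a(1)] by (simp add: dotp_simps e)
    qed
  qed auto
  then show ?thesis by (simp add: bij_betw_same_card)
qed

lemma pencil_point:
  fixes a b :: "'F::{field,finite}^'n"
  assumes "ppoint P"
  shows "(\<Sum>c\<in>UNIV. if P \<subseteq> hk (a + c *s b) then 1 else 0) + (if P \<subseteq> hk b then 1 else 0)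
     = 1 + CARD('F) * (if P \<subseteq> hk a \<and> P \<subseteq> hk b then 1 else (0::nat))"
proof -
  obtain y where y: "y \<noteq> 0" "P = vec.span {y}" using ppointE[OF assms] by blast
  have eq: "P \<subseteq> hk (a + c *s b) \<longleftrightarrow> dotp a y + c * dotp b y = 0" for c
    using y(2) span_sing_hk[of y "a + c *s b"] by (simp add: dotp_simps)
  have s: "(\<Sum>c\<in>UNIV. if P \<subseteq> hk (a + c *s b) then 1 else (0::nat)) = card {c. dotp a y + c * dotp b y = 0}"
    using card_filter_sum[of UNIV "\<lambda>c. dotp a y + c * dotp b y = 0"] eq by simp
  show ?thesis
  proof (cases "dotp b y = 0")
    case True
    then show ?thesis using s y(2) span_sing_hk by auto
  next
    case False
    have "{c. dotp a y + c * dotp b y = 0} = {- dotp a y / dotp b y}"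
    proof -
      have "dotp a y + c * dotp b y = 0 \<longleftrightarrow> c = - dotp a y / dotp b y" for c
        using False by (metis add.commute add_eq_0_iff2 nonzero_eq_divide_eq)
      then show ?thesis by auto
    qed
    then show ?thesis using s y(2) span_sing_hk False by auto
  qed
qed

lemma pencil:
  fixes a b :: "'F::{field,finite}^'n"
  assumes "\<forall>P\<in>S'. ppoint P"
  shows "(\<Sum>c\<in>UNIV. card {P\<in>S'. P \<subseteq> hk (a + c *s b)}) + card {P\<in>S'. P \<subseteq> hk b}
     = card S' + CARD('F) * card {P\<in>S'. P \<subseteq> hk a \<and> P \<subseteq> hk b}"
proof -
  have "(\<Sum>c\<in>UNIV. card {P\<in>S'. P \<subseteq> hk (a + c *s b)}) + card {P\<in>S'. P \<subseteq> hk b}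
     = (\<Sum>c\<in>UNIV. \<Sum>P\<in>S'. if P \<subseteq> hk (a + c *s b) then 1 else 0) + (\<Sum>P\<in>S'. if P \<subseteq> hk b then 1 else 0)"
    by (simp add: card_filter_sum)
  also have "\<dots> = (\<Sum>P\<in>S'. (\<Sum>c\<in>UNIV. if P \<subseteq> hk (a + c *s b) then 1 else 0) + (if P \<subseteq> hk b then 1 else 0))"
    by (simp add: sum.swap[of _ UNIV S'] sum.distrib)
  also have "\<dots> = (\<Sum>P\<in>S'. 1 + CARD('F) * (if P \<subseteq> hk a \<and> P \<subseteq> hk b then 1 else (0::nat)))"
  proof (rule sum.cong[OF refl])
    fix P assume "P \<in> S'"
    then show "(\<Sum>c\<in>UNIV. if P \<subseteq> hk (a + c *s b) then 1 else 0) + (if P \<subseteq> hk b then 1 else 0)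
      = 1 + CARD('F) * (if P \<subseteq> hk a \<and> P \<subseteq> hk b then 1 else (0::nat))"
      using pencil_point[of P a b] assms by simp
  qed
  also have "\<dots> = (\<Sum>P\<in>S'. 1) + (\<Sum>P\<in>S'. CARD('F) * (if P \<subseteq> hk a \<and> P \<subseteq> hk b then 1 else (0::nat)))"
    by (rule sum.distrib)
  also have "\<dots> = card S' + CARD('F) * card {P\<in>S'. P \<subseteq> hk a \<and> P \<subseteq> hk b}"
    by (simp add: sum_distrib_left[symmetric] card_filter_sum)
  finally show ?thesis .
qed

lemma descent:
  fixes x :: "'F::{field,finite}^'n"
  assumes pts: "\<forall>P\<in>S. ppoint P"
    and K0: "\<And>a. dotp a x \<noteq> 0 \<Longrightarrow> card {P\<in>S. P \<subseteq> hk a} = K0"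
    and fin: "finite B" and Bx: "\<forall>b\<in>B. dotp b x = 0"
  shows "dotp a x \<noteq> 0 \<Longrightarrow> dotp a' x \<noteq> 0 \<Longrightarrow>
     card {P\<in>S. P \<subseteq> hk a \<and> (\<forall>b\<in>B. P \<subseteq> hk b)} = card {P\<in>S. P \<subseteq> hk a' \<and> (\<forall>b\<in>B. P \<subseteq> hk b)}"
  using fin Bx
proof (induction B arbitrary: a a' rule: finite_induct)
  case empty
  then show ?case using K0 by simp
next
  case (insert b B)
  define S' where "S' = {P\<in>S. \<forall>b\<in>B. P \<subseteq> hk b}"
  have pS': "\<forall>P\<in>S'. ppoint P" using pts by (auto simp: S'_def)
  have NB: "card {P\<in>S. P \<subseteq> hk a \<and> (\<forall>b\<in>B. P \<subseteq> hk b)} = card {P\<in>S'. P \<subseteq> hk a}" for a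
    by (rule arg_cong[where f=card]) (auto simp: S'_def)
  have NB': "card {P\<in>S. P \<subseteq> hk a \<and> (\<forall>b'\<in>insert b B. P \<subseteq> hk b')} = card {P\<in>S'. P \<subseteq> hk a \<and> P \<subseteq> hk b}" for a
    by (rule arg_cong[where f=card]) (auto simp: S'_def)
  have bx: "dotp b x = 0" and Bx': "\<forall>b\<in>B. dotp b x = 0" using insert.prems by auto
  have key: "card S' + CARD('F) * card {P\<in>S'. P \<subseteq> hk a0 \<and> P \<subseteq> hk b}
     = CARD('F) * card {P\<in>S'. P \<subseteq> hk a} + card {P\<in>S'. P \<subseteq> hk b}"
    if "dotp a0 x \<noteq> 0" for a0
  proof -
    have "card {P\<in>S'. P \<subseteq> hk (a0 + c *s b)} = card {P\<in>S'. P \<subseteq> hk a}" for c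
    proof -
      have "dotp (a0 + c *s b) x \<noteq> 0" using that bx by (simp add: dotp_simps)
      then show ?thesis using insert.IH[of "a0 + c *s b" a] Bx' insert.prems NB by simp
    qed
    then show ?thesis using pencil[OF pS', of a0 b] by simp
  qed
  have q0: "CARD('F) \<noteq> 0" by simp
  have "CARD('F) * card {P\<in>S'. P \<subseteq> hk a \<and> P \<subseteq> hk b} = CARD('F) * card {P\<in>S'. P \<subseteq> hk a' \<and> P \<subseteq> hk b}"
    using key[of a] key[of a'] insert.prems by linarith
  then show ?case using q0 NB' by simp
qed



lemma sum_ge_eq:
  fixes f g :: "'a \<Rightarrow> nat"
  assumes "finite A" "\<forall>a\<in>A. g a \<le> f a" "sum f A \<le> sum g A"
  shows "\<forall>a\<in>A. f a = g a"
proof (rule ccontr)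
  assume "\<not> (\<forall>a\<in>A. f a = g a)"
  then obtain a where "a \<in> A" "g a < f a" using assms(2) by force
  then have "sum g A < sum f A" using assms by (intro sum_strict_mono_ex1) auto
  then show False using assms(3) by simp
qed

lemma step2:
  fixes S :: "('F::{field,finite} ^ 'n) set set" and r :: nat
  assumes pts: "\<forall>P\<in>S. ppoint P"
    and div: "qr_divisible r S"
    and cS: "card S = CARD('F) ^ (r + 1)"
    and L: "kspace (r + 1) L" and F: "kspace r F" and FL: "F \<subseteq> L"
    and LFS: "points_of L - points_of F \<subseteq> S"
  shows "(\<forall>P\<in>S. \<not> P \<subseteq> F) \<and> (\<forall>a. (\<exists>x\<in>F. dotp a x \<noteq> 0) \<longrightarrow> card {P\<in>S. P \<subseteq> hk a} = CARD('F) ^ r)"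
proof -
  define q where "q = CARD('F)"
  have q2: "q \<ge> 2" unfolding q_def by (rule card_field_ge2)
  have subF: "vec.subspace F" and dF: "vec.dim F = r" using F by (auto simp: kspace_def)
  have subL: "vec.subspace L" and dL: "vec.dim L = r + 1" using L by (auto simp: kspace_def)
  define T where "T = {a :: 'F^'n. \<exists>x\<in>F. dotp a x \<noteq> 0}"
  define K where "K a = card {P\<in>S. P \<subseteq> hk a}" for a
  define N0 where "N0 P = card {a\<in>T. P \<subseteq> hk a}" for P
  obtain l where l: "l \<in> L" "l \<notin> F"
  proof -
    have "\<not> L \<subseteq> F"
    proof
      assume "L \<subseteq> F"
      then have "vec.dim L \<le> vec.dim F" by (rule vec.dim_subset)
      then show False using dF dL by simp
    qed
    then show ?thesis using that by blast
  qed
  have K_ge: "q ^ r \<le> K a" if aT: "a \<in> T" for a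
  proof -
    obtain x0 where x0: "x0 \<in> F" "dotp a x0 \<noteq> 0" using aT by (auto simp: T_def)
    have a0: "a \<noteq> 0" using x0 by auto
    have hyp: "hyperplane (hk a)" by (rule hyperplane_hk[OF a0])
    have seteq: "S \<inter> points_of (hk a) = {P\<in>S. P \<subseteq> hk a}"
      using pts by (auto simp: points_of_def)
    have "K a mod q ^ r = card S mod q ^ r"
      using div hyp seteq unfolding qr_divisible_def K_def q_def by auto
    also have "\<dots> = 0" using cS unfolding q_def by simp
    finally have dvd: "q ^ r dvd K a" by auto
    define y where "y = l - (dotp a l / dotp a x0) *s x0"
    have yL: "y \<in> L" unfolding y_def
      using l(1) x0(1) FL subL by (intro vec.subspace_diff vec.subspace_scale) auto
    have yF: "y \<notin> F"
    proof
      assume "y \<in> F"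
      then have "y + (dotp a l / dotp a x0) *s x0 \<in> F"
        using x0(1) subF by (intro vec.subspace_add vec.subspace_scale) auto
      then show False using l(2) by (simp add: y_def)
    qed
    have ya: "dotp a y = 0" using x0(2) by (simp add: y_def dotp_simps)
    have y0: "y \<noteq> 0" using yF subF vec.subspace_0 by auto
    have "vec.span {y} \<in> points_of L - points_of F"
      using ppoint_span[OF y0] span_sing_subset_iff[OF subL] span_sing_subset_iff[OF subF] yL yF
      by (auto simp: points_of_def)
    then have "vec.span {y} \<in> {P\<in>S. P \<subseteq> hk a}" using LFS span_sing_hk ya by auto
    then have "K a \<noteq> 0" unfolding K_def by (auto simp: card_eq_0_iff)
    then show ?thesis using dvd by (simp add: dvd_imp_le)
  qed
  have dc: "(\<Sum>a\<in>T. K a) = (\<Sum>P\<in>S. N0 P)"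
    unfolding K_def N0_def
    by (simp add: card_filter_sum sum.swap[of _ T S])
  have i: "card T = q * N0 P" if PS: "P \<in> S" and PF: "\<not> P \<subseteq> F" for P
  proof -
    obtain p where p: "p \<noteq> 0" "P = vec.span {p}" using ppointE pts PS by metis
    have pF: "p \<notin> F" using PF p(2) span_sing_subset_iff[OF subF] by auto
    obtain e where e: "\<forall>w\<in>F. dotp e w = 0" "dotp e p = 1" using separation[OF subF pF] by blast
    have eqc: "card {a\<in>T. dotp a p = c} = card {a\<in>T. dotp a p = 0}" for c
      by (rule shift_card[OF e(2)]) (auto simp: T_def dotp_simps e(1))
    have "card T = (\<Sum>c\<in>(UNIV::'F set). card {a\<in>T. dotp a p = c})"
      by (rule card_partition_vals) simp
    also have "\<dots> = (\<Sum>c\<in>(UNIV::'F set). card {a\<in>T. dotp a p = 0})"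
      by (rule sum.cong[OF refl]) (rule eqc)
    finally have "card T = (\<Sum>c\<in>(UNIV::'F set). card {a\<in>T. dotp a p = 0})" .
    moreover have "{a\<in>T. dotp a p = 0} = {a\<in>T. P \<subseteq> hk a}" using p(2) span_sing_hk by auto
    ultimately show ?thesis unfolding N0_def q_def by simp
  qed
  have ii: "q * N0 P < card T" if PS: "P \<in> S" and PF: "P \<subseteq> F" for P
  proof -
    obtain p where p: "p \<noteq> 0" "P = vec.span {p}" using ppointE pts PS by metis
    have pF: "p \<in> F" using PF p(2) span_sing_subset_iff[OF subF] by auto
    have p0: "p \<notin> {0}" using p by simp
    obtain e where e: "dotp e p = 1" using separation[OF vec.subspace_single_0 p0] by blast
    define Z where "Z = {a :: 'F^'n. dotp a p = 0}"
    have Zc: "card {a\<in>UNIV. dotp a p = c} = card Z" for c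
      unfolding Z_def using shift_card[OF e, of UNIV c] by simp
    have Tc: "{a\<in>T. dotp a p = c} = {a\<in>UNIV. dotp a p = c}" if "c \<noteq> 0" for c
      using that pF by (auto simp: T_def)
    have N0Z: "N0 P < card Z"
    proof -
      have "{a\<in>T. P \<subseteq> hk a} \<subseteq> Z - {0}" using p(2) span_sing_hk by (auto simp: Z_def T_def)
      then have "N0 P \<le> card (Z - {0})" unfolding N0_def by (intro card_mono) auto
      moreover have "0 \<in> Z" by (simp add: Z_def)
      moreover then have "card Z > 0" by (auto simp: card_gt_0_iff)
      ultimately show ?thesis by (simp add: card_Diff_singleton)
    qed
    have "card T = (\<Sum>c\<in>(UNIV::'F set). card {a\<in>T. dotp a p = c})"
      by (rule card_partition_vals) simp
    also have "\<dots> = card {a\<in>T. dotp a p = 0} + (\<Sum>c\<in>UNIV - {0}. card {a\<in>T. dotp a p = c})"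
      by (subst sum.remove[of _ 0]) auto
    also have "\<dots> = N0 P + (\<Sum>c\<in>UNIV - {0::'F}. card Z)"
    proof -
      have "{a\<in>T. dotp a p = 0} = {a\<in>T. P \<subseteq> hk a}" using p(2) span_sing_hk by auto
      moreover have "(\<Sum>c\<in>UNIV - {0}. card {a\<in>T. dotp a p = c}) = (\<Sum>c\<in>UNIV - {0::'F}. card Z)"
        using Tc Zc by (intro sum.cong) auto
      ultimately show ?thesis unfolding N0_def by simp
    qed
    also have "\<dots> = N0 P + (q - 1) * card Z"
      by (simp add: q_def card_Diff_singleton)
    finally have "card T = N0 P + (q - 1) * card Z" .
    moreover have "(q - 1) * (N0 P + 1) \<le> (q - 1) * card Z" using N0Z by (intro mult_le_mono2) simp
    moreover have "(q - 1) * (N0 P + 1) = (q - 1) * N0 P + (q - 1)" by (simp only: distrib_left mult_1_right)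
    moreover have "q * N0 P = N0 P + (q - 1) * N0 P" using q2 by (cases q) auto
    moreover have "q - 1 \<ge> 1" using q2 by simp
    ultimately show ?thesis by linarith
  qed
  have le: "q * N0 P \<le> card T" if "P \<in> S" for P
  proof (cases "P \<subseteq> F")
    case True then show ?thesis using ii[OF that] by simp
  next
    case False then show ?thesis using i[OF that] by simp
  qed
  have Tfin: "finite T" by simp
  have lower: "card T * q ^ r \<le> (\<Sum>a\<in>T. K a)"
  proof -
    have "(\<Sum>a\<in>T. q ^ r) \<le> (\<Sum>a\<in>T. K a)" using K_ge by (intro sum_mono) auto
    then show ?thesis by simp
  qed
  have upper: "q * (\<Sum>P\<in>S. N0 P) \<le> (\<Sum>P\<in>S. card T)"
    unfolding sum_distrib_left using le by (intro sum_mono) auto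
  have noF: "\<forall>P\<in>S. \<not> P \<subseteq> F"
  proof (rule ccontr)
    assume "\<not> (\<forall>P\<in>S. \<not> P \<subseteq> F)"
    then obtain P0 where P0: "P0 \<in> S" "P0 \<subseteq> F" by blast
    have "q * (\<Sum>P\<in>S. N0 P) < (\<Sum>P\<in>S. card T)"
      unfolding sum_distrib_left using le ii P0
      by (intro sum_strict_mono_ex1) auto
    also have "\<dots> = q * (card T * q ^ r)" using cS by (simp add: q_def)
    also have "\<dots> \<le> q * (\<Sum>a\<in>T. K a)" using lower by simp
    finally show False using dc by simp
  qed
  have "q * (\<Sum>a\<in>T. K a) \<le> q * (card T * q ^ r)"
    using upper dc cS by (simp add: q_def mult.commute mult.left_commute)
  then have "(\<Sum>a\<in>T. K a) \<le> (\<Sum>a\<in>T. q ^ r)" using q2 by simp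
  then have "\<forall>a\<in>T. K a = q ^ r" using K_ge by (intro sum_ge_eq) auto
  then show ?thesis using noF unfolding T_def K_def q_def by auto
qed



lemma closure_step:
  fixes S :: "('F::{field,finite} ^ 'n) set set" and r :: nat
  assumes pts: "\<forall>P\<in>S. ppoint P"
    and noF: "\<forall>P\<in>S. \<not> P \<subseteq> F"
    and Kq: "\<forall>a. (\<exists>x\<in>F. dotp a x \<noteq> 0) \<longrightarrow> card {P\<in>S. P \<subseteq> hk a} = CARD('F) ^ r"
    and subF: "vec.subspace F" and PS: "P \<in> S" and Pp: "P = vec.span {p}" and xF: "x \<in> F"
  shows "vec.span {p + x} \<in> S"
proof (cases "x = 0")
  case True then show ?thesis using PS Pp by simp
next
  case x0: False
  have pF: "p \<notin> F" using noF PS Pp span_sing_subset_iff[OF subF] by auto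
  have K0: "card {P\<in>S. P \<subseteq> hk a} = CARD('F) ^ r" if "dotp a x \<noteq> 0" for a
    using Kq that xF by blast
  define B0 where "B0 = {b :: 'F^'n. dotp b x = 0 \<and> dotp b p = 0}"
  have desc: "card {P\<in>S. P \<subseteq> hk a \<and> (\<forall>b\<in>B0. P \<subseteq> hk b)} = card {P\<in>S. P \<subseteq> hk a' \<and> (\<forall>b\<in>B0. P \<subseteq> hk b)}"
    if "dotp a x \<noteq> 0" "dotp a' x \<noteq> 0" for a a'
    by (rule descent[OF pts K0 _ _ that]) (auto simp: B0_def)
  have xp: "x \<notin> vec.span {p}"
  proof
    assume "x \<in> vec.span {p}"
    then obtain k where k: "x = k *s p" by (auto simp: vec.span_singleton)
    then have "k \<noteq> 0" using x0 by auto
    then have "p = inverse k *s x" using k by simp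
    then have "p \<in> F" using xF subF by (simp add: vec.subspace_scale)
    then show False using pF by simp
  qed
  obtain a1 where a1: "\<forall>w\<in>vec.span {p}. dotp a1 w = 0" "dotp a1 x = 1"
    using separation[OF vec.subspace_span xp] by blast
  have xpx: "x \<notin> vec.span {p + x}"
  proof
    assume "x \<in> vec.span {p + x}"
    then obtain k where k: "x = k *s (p + x)" by (auto simp: vec.span_singleton)
    have "k \<noteq> 0" using x0 k by auto
    have "k *s p = (1 - k) *s x" using k by (simp add: algebra_simps vec.scale_left_diff_distrib)
    then have peq: "p = inverse k *s ((1 - k) *s x)" using \<open>k \<noteq> 0\<close>
      by (metis vec.scale_scale left_inverse vec.scale_one)
    have "inverse k *s ((1 - k) *s x) \<in> F" using subF xF by (intro vec.subspace_scale)
    then have "p \<in> F" by (subst peq)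
    then show False using pF by simp
  qed
  obtain a2 where a2: "\<forall>w\<in>vec.span {p + x}. dotp a2 w = 0" "dotp a2 x = 1"
    using separation[OF vec.subspace_span xpx] by blast
  have "P \<in> {P\<in>S. P \<subseteq> hk a1 \<and> (\<forall>b\<in>B0. P \<subseteq> hk b)}"
    using PS Pp a1(1) span_sing_hk vec.span_base[of p "{p}"] by (auto simp: B0_def)
  then have ne1: "card {P\<in>S. P \<subseteq> hk a1 \<and> (\<forall>b\<in>B0. P \<subseteq> hk b)} \<noteq> 0" by (auto simp: card_eq_0_iff)
  have eq12: "card {P\<in>S. P \<subseteq> hk a1 \<and> (\<forall>b\<in>B0. P \<subseteq> hk b)} = card {P\<in>S. P \<subseteq> hk a2 \<and> (\<forall>b\<in>B0. P \<subseteq> hk b)}"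
    using desc[of a1 a2] a1(2) a2(2) by simp
  have "card {P\<in>S. P \<subseteq> hk a2 \<and> (\<forall>b\<in>B0. P \<subseteq> hk b)} \<noteq> 0" using ne1 unfolding eq12 .
  then obtain R where R: "R \<in> S" "R \<subseteq> hk a2" "\<forall>b\<in>B0. R \<subseteq> hk b" by (auto simp: card_eq_0_iff)
  obtain y where y: "y \<noteq> 0" "R = vec.span {y}" using ppointE pts R(1) by metis
  have ya2: "dotp a2 y = 0" using R(2) y(2) span_sing_hk[of y a2] by auto
  have yB: "dotp b y = 0" if "b \<in> B0" for b using R(3) that y(2) span_sing_hk[of y b] by auto
  have yW: "y \<in> vec.span (insert p {x})"
  proof (rule ccontr)
    assume "y \<notin> vec.span (insert p {x})"
    then obtain b where b: "\<forall>w\<in>vec.span (insert p {x}). dotp b w = 0" "dotp b y = 1"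
      using separation[OF vec.subspace_span] by blast
    have "b \<in> B0" using b(1) vec.span_base[of p "insert p {x}"] vec.span_base[of x "insert p {x}"]
      by (auto simp: B0_def)
    then show False using yB b(2) by simp
  qed
  then obtain k where "y - k *s p \<in> vec.span {x}" using vec.span_breakdown_eq by blast
  then obtain m where m: "y - k *s p = m *s x" by (auto simp: vec.span_singleton)
  have yeq: "y = k *s p + m *s x" using m by (simp add: algebra_simps)
  have "dotp a2 (p + x) = 0" using a2(1) vec.span_base[of "p + x" "{p + x}"] by simp
  then have a2p: "dotp a2 p = -1" using a2(2) by (simp add: dotp_simps eq_neg_iff_add_eq_0)
  have "m = k" using ya2 yeq a2p a2(2) by (simp add: dotp_simps)
  then have y2: "y = k *s (p + x)" using yeq by (simp add: vec.scale_right_distrib)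
  then have "k \<noteq> 0" using y(1) by auto
  then have "R = vec.span {p + x}" unfolding y(2) y2 by (rule span_sing_scale)
  then show ?thesis using R(1) by simp
qed



lemma size_sum_mset: "finite A \<Longrightarrow> size (sum f A) = (\<Sum>a\<in>A. size (f a :: 'b multiset))"
  by (induction A rule: finite_induct) auto

lemma span_insert_shift:
  fixes F :: "('F::{field,finite}^'n) set"
  assumes subF: "vec.subspace F" and xF: "x \<in> F"
  shows "vec.span (insert (p + x) F) = vec.span (insert p F)"
proof -
  have spF: "vec.span F = F" using subF by simp
  have "(\<exists>k. z - k *s (p + x) \<in> F) \<longleftrightarrow> (\<exists>k. z - k *s p \<in> F)" for z
  proof
    assume "\<exists>k. z - k *s (p + x) \<in> F"
    then obtain k where k: "z - k *s (p + x) \<in> F" by blast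
    have "z - k *s (p + x) + k *s x \<in> F" using k xF subF by (intro vec.subspace_add vec.subspace_scale) auto
    moreover have "z - k *s (p + x) + k *s x = z - k *s p" by (simp add: vec.scale_right_distrib algebra_simps)
    ultimately show "\<exists>k. z - k *s p \<in> F" by (intro exI[of _ k]) simp
  next
    assume "\<exists>k. z - k *s p \<in> F"
    then obtain k where k: "z - k *s p \<in> F" by blast
    have "z - k *s p - k *s x \<in> F" by (rule vec.subspace_diff[OF subF k vec.subspace_scale[OF subF xF]])
    moreover have "z - k *s p - k *s x = z - k *s (p + x)" by (simp add: vec.scale_right_distrib algebra_simps)
    ultimately show "\<exists>k. z - k *s (p + x) \<in> F" by (intro exI[of _ k]) simp
  qed
  then show ?thesis by (intro set_eqI) (simp only: vec.span_breakdown_eq spF)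
qed

lemma span_insert_scale:
  fixes F :: "('F::{field,finite}^'n) set"
  assumes "c \<noteq> 0"
  shows "vec.span (insert (c *s p) F) = vec.span (insert p F)"
proof -
  have "(\<exists>k. z - k *s (c *s p) \<in> vec.span F) \<longleftrightarrow> (\<exists>k. z - k *s p \<in> vec.span F)" for z
  proof
    assume "\<exists>k. z - k *s (c *s p) \<in> vec.span F"
    then show "\<exists>k. z - k *s p \<in> vec.span F" by auto
  next
    assume "\<exists>k. z - k *s p \<in> vec.span F"
    then obtain k where "z - k *s p \<in> vec.span F" by blast
    moreover have "(k / c) *s (c *s p) = k *s p" using assms by simp
    ultimately show "\<exists>k. z - k *s (c *s p) \<in> vec.span F" by metis
  qed
  then show ?thesis by (intro set_eqI) (simp only: vec.span_breakdown_eq)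
qed

lemma kspace_insert:
  fixes F :: "('F::{field,finite}^'n) set"
  assumes subF: "vec.subspace F" and dF: "vec.dim F = r" and pF: "p \<notin> F"
  shows "kspace (r + 1) (vec.span (insert p F))"
proof -
  have spF: "vec.span F = F" using subF by simp
  have "vec.dim (insert p F) = vec.dim F + 1" using pF by (simp add: vec.dim_insert spF del: vec.span_eq_iff)
  then show ?thesis unfolding kspace_def using dF by simp
qed

lemma fiber_eq:
  fixes F :: "('F::{field,finite}^'n) set"
  assumes subF: "vec.subspace F" and pF: "p \<notin> F"
  shows "points_of (vec.span (insert p F)) - points_of F = (\<lambda>x. vec.span {p + x}) ` F"
proof
  have spF: "vec.span F = F" using subF by simp
  show "points_of (vec.span (insert p F)) - points_of F \<subseteq> (\<lambda>x. vec.span {p + x}) ` F"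
  proof
    fix Q assume Q: "Q \<in> points_of (vec.span (insert p F)) - points_of F"
    then have Qp: "ppoint Q" "Q \<subseteq> vec.span (insert p F)" "\<not> Q \<subseteq> F" by (auto simp: points_of_def)
    obtain y where y: "y \<noteq> 0" "Q = vec.span {y}" using ppointE[OF Qp(1)] by blast
    have yF: "y \<notin> F" using Qp(3) y(2) span_sing_subset_iff[OF subF] by auto
    have "y \<in> vec.span (insert p F)" using Qp(2) y(2) vec.span_base[of y "{y}"] by auto
    then obtain k where k: "y - k *s p \<in> F" using vec.span_breakdown_eq spF by blast
    have k0: "k \<noteq> 0" using k yF by auto
    define x where "x = inverse k *s (y - k *s p)"
    have xF: "x \<in> F" using k subF unfolding x_def by (intro vec.subspace_scale)
    have "k *s (p + x) = y" using k0 unfolding x_def by (simp add: algebra_simps vec.scale_right_distrib)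
    then have "Q = vec.span {p + x}" using y(2) span_sing_scale[OF k0, of "p + x"] by simp
    then show "Q \<in> (\<lambda>x. vec.span {p + x}) ` F" using xF by blast
  qed
  show "(\<lambda>x. vec.span {p + x}) ` F \<subseteq> points_of (vec.span (insert p F)) - points_of F"
  proof
    fix Q assume "Q \<in> (\<lambda>x. vec.span {p + x}) ` F"
    then obtain x where x: "x \<in> F" "Q = vec.span {p + x}" by blast
    have pxF: "p + x \<notin> F"
    proof
      assume "p + x \<in> F"
      then have "p + x - x \<in> F" using x(1) subF by (intro vec.subspace_diff)
      then show False using pF by simp
    qed
    then have px0: "p + x \<noteq> 0" using vec.subspace_0[OF subF] by auto
    have "p + x \<in> vec.span (insert p F)"
      using x(1) by (intro vec.span_add vec.span_base) auto
    then have "Q \<subseteq> vec.span (insert p F)" using x(2) span_sing_subset_iff[OF vec.subspace_span] by auto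
    moreover have "\<not> Q \<subseteq> F" using x(2) pxF span_sing_subset_iff[OF subF] by auto
    ultimately show "Q \<in> points_of (vec.span (insert p F)) - points_of F"
      using ppoint_span[OF px0] x(2) by (auto simp: points_of_def)
  qed
qed

lemma fiber_inj:
  fixes F :: "('F::{field,finite}^'n) set"
  assumes subF: "vec.subspace F" and pF: "p \<notin> F"
  shows "inj_on (\<lambda>x. vec.span {p + x}) F"
proof (rule inj_onI)
  fix x x' assume x: "x \<in> F" and x': "x' \<in> F" and eq: "vec.span {p + x} = vec.span {p + x'}"
  have "p + x' \<in> vec.span {p + x}" using eq vec.span_base[of "p + x'" "{p + x'}"] by auto
  then obtain k where k: "p + x' = k *s (p + x)" by (auto simp: vec.span_singleton)
  show "x = x'"
  proof (cases "k = 1")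
    case True then show ?thesis using k by simp
  next
    case False
    have "k *s x - x' \<in> F" using x x' subF by (intro vec.subspace_diff vec.subspace_scale) auto
    then have "inverse (1 - k) *s (k *s x - x') \<in> F" using subF by (intro vec.subspace_scale)
    moreover have "(1 - k) *s p = k *s x - x'" using k
      by (simp add: algebra_simps vec.scale_left_diff_distrib vec.scale_right_distrib)
    moreover have "1 - k \<noteq> 0" using False by simp
    ultimately have "p \<in> F" by (metis vec.scale_scale left_inverse vec.scale_one)
    then show ?thesis using pF by simp
  qed
qed



theorem mainTheorem10:
  fixes S :: "('F::{field,finite} ^ 'n) set set" and r :: nat
  assumes "r \<ge> 1"
    and "\<forall>P\<in>S. ppoint P"
    and "spanning S"
    and "qr_divisible r S"
    and "card S = CARD('F) ^ (r + 1)"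
    and "\<exists>L F. kspace (r + 1) L \<and> kspace r F \<and> F \<subseteq> L \<and> points_of L - points_of F \<subseteq> S"
  shows "cylinder r (mset_set S)"
proof -
  note pts = assms(2) and div = assms(4) and cS = assms(5)
  obtain L F where L: "kspace (r + 1) L" and F: "kspace r F" and FL: "F \<subseteq> L"
    and LFS: "points_of L - points_of F \<subseteq> S" using assms(6) by blast
  have subF: "vec.subspace F" and dF: "vec.dim F = r" using F by (auto simp: kspace_def)
  note s2 = step2[OF pts div cS L F FL LFS]
  then have noF: "\<forall>P\<in>S. \<not> P \<subseteq> F"
    and Kq: "\<forall>a. (\<exists>x\<in>F. dotp a x \<noteq> 0) \<longrightarrow> card {P\<in>S. P \<subseteq> hk a} = CARD('F) ^ r" by auto
  have clos: "vec.span {p + x} \<in> S" if "P \<in> S" "P = vec.span {p}" "x \<in> F" for P p x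
    using closure_step[OF pts noF Kq subF that] .
  define q where "q = CARD('F)"
  define MM where "MM = {vec.span (insert p F) | p. vec.span {p} \<in> S}"
  define fib where "fib M = points_of M - points_of F" for M
  have pnF: "p \<notin> F" if "vec.span {p} \<in> S" for p
    using noF that span_sing_subset_iff[OF subF] by auto
  have MMD: "\<exists>p. vec.span {p} \<in> S \<and> p \<notin> F \<and> M = vec.span (insert p F)" if "M \<in> MM" for M
    using that pnF unfolding MM_def by blast
  have fibS: "fib M \<subseteq> S" if MM0: "M \<in> MM" for M
  proof -
    obtain p where p: "vec.span {p} \<in> S" "p \<notin> F" "M = vec.span (insert p F)" using MMD[OF MM0] by blast
    show ?thesis unfolding fib_def p(3) fiber_eq[OF subF p(2)] using clos[OF p(1) refl] by blast
  qed
  have cardF: "card F = q ^ r" using card_subspace[OF subF] dF by (simp add: q_def)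
  have fibcard: "card (fib M) = q ^ r" if MM0: "M \<in> MM" for M
  proof -
    obtain p where p: "vec.span {p} \<in> S" "p \<notin> F" "M = vec.span (insert p F)" using MMD[OF MM0] by blast
    show ?thesis unfolding fib_def p(3) fiber_eq[OF subF p(2)] card_image[OF fiber_inj[OF subF p(2)]] cardF ..
  qed
  have kM: "kspace (r + 1) M \<and> F \<subseteq> M" if MM0: "M \<in> MM" for M
  proof -
    obtain p where p: "vec.span {p} \<in> S" "p \<notin> F" "M = vec.span (insert p F)" using MMD[OF MM0] by blast
    have "F \<subseteq> vec.span (insert p F)" using vec.span_superset[of "insert p F"] by blast
    then show ?thesis using kspace_insert[OF subF dF p(2)] p(3) by simp
  qed
  have uniq: "{M\<in>MM. Q \<in> fib M} = {vec.span (insert y F)}" if "Q \<in> S" "Q = vec.span {y}" "y \<noteq> 0" for Q y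
  proof
    have yF: "y \<notin> F" using pnF that by simp
    have M0: "vec.span (insert y F) \<in> MM" using that unfolding MM_def by blast
    have "Q \<in> fib (vec.span (insert y F))" unfolding fib_def fiber_eq[OF subF yF]
      using that(2) vec.subspace_0[OF subF] by (intro image_eqI[of _ _ 0]) auto
    then show "{vec.span (insert y F)} \<subseteq> {M\<in>MM. Q \<in> fib M}" using M0 by auto
    show "{M\<in>MM. Q \<in> fib M} \<subseteq> {vec.span (insert y F)}"
    proof
      fix M assume M: "M \<in> {M\<in>MM. Q \<in> fib M}"
      obtain p where p: "vec.span {p} \<in> S" "p \<notin> F" "M = vec.span (insert p F)" using MMD M by blast
      obtain x where x: "x \<in> F" "Q = vec.span {p + x}" using M fiber_eq[OF subF p(2)] p(3) unfolding fib_def by auto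
      have "y \<in> vec.span {p + x}" using x(2) that(2) vec.span_base[of y "{y}"] by auto
      then obtain c where c: "y = c *s (p + x)" by (auto simp: vec.span_singleton)
      have c0: "c \<noteq> 0" using c that(3) by auto
      have "vec.span (insert y F) = M"
        unfolding c p(3) span_insert_scale[OF c0] span_insert_shift[OF subF x(1)] ..
      then show "M \<in> {vec.span (insert y F)}" by simp
    qed
  qed
  have finMM: "finite MM" by simp
  have msum: "mset_set S = (\<Sum>M\<in>MM. mset_set (fib M))"
  proof (rule multiset_eqI)
    fix Q
    have "count (\<Sum>M\<in>MM. mset_set (fib M)) Q = (\<Sum>M\<in>MM. if Q \<in> fib M then 1 else 0)"
      by (auto simp: count_sum count_mset_set intro!: sum.cong)
    also have "\<dots> = card {M\<in>MM. Q \<in> fib M}" by (simp add: card_filter_sum)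
    also have "\<dots> = count (mset_set S) Q"
    proof (cases "Q \<in> S")
      case True
      obtain y where y: "y \<noteq> 0" "Q = vec.span {y}" using ppointE pts True by metis
      show ?thesis using uniq[OF True y(2) y(1)] True by simp
    next
      case False
      then have "{M\<in>MM. Q \<in> fib M} = {}" using fibS by blast
      then show ?thesis using False by simp
    qed
    finally show "count (mset_set S) Q = count (\<Sum>M\<in>MM. mset_set (fib M)) Q" by simp
  qed
  have "card S = (\<Sum>M\<in>MM. card (fib M))"
    using arg_cong[OF msum, of size] by (simp add: size_sum_mset)
  also have "\<dots> = card MM * q ^ r" using fibcard by simp
  finally have "q * q ^ r = card MM * q ^ r" using cS by (simp add: q_def)
  moreover have "q \<noteq> 0" by (simp add: q_def)
  ultimately have cMM: "card MM = q" by simp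
  obtain Ls where Ls: "set Ls = MM" "distinct Ls" using finite_distinct_list[OF finMM] by blast
  have "mset_set S = sum_list (map (\<lambda>L. mset_set (points_of L - points_of F)) Ls)"
    unfolding msum sum_list_distinct_conv_sum_set[OF Ls(2)] Ls(1) fib_def ..
  moreover have "length Ls = CARD('F)" using distinct_card[OF Ls(2)] Ls(1) cMM by (simp add: q_def)
  moreover have "\<forall>L\<in>set Ls. kspace (r + 1) L \<and> F \<subseteq> L" using kM Ls(1) by blast
  moreover have "size (mset_set S) = CARD('F) ^ (r + 1)" using cS by simp
  ultimately show ?thesis unfolding cylinder_def using F by blast
qed

end
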